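(* Suppose (EDR) holds with $\beta>1$, $\mathcal H$ has embedding index $\alpha_0$ with $\frac1\beta\le\alpha_0<1$, and $f_\rho^*\in[\mathcal H]^s$ with $\|f_\rho^*\|_{[\mathcal H]^s}\le R$ for some $0<s\le\alpha_0$. Let $f_\nu=\varphi_\nu(T)S_k^*f_\rho^*$. Then for any $\nu>0$ and any $\alpha_0<\alpha\le1$, $$\|f_\nu\|_{L^\infty}\le M_\alpha E R\,\nu^{\frac{\alpha-s}{2}}.$$
   Context: $\mathcal X\subseteq\mathbb R^d$ compact, $\rho$ a distribution on $\mathcal X\times\mathcal Y$ with marginal $\mu$, $f_\rho^*(x)=\int y\,d\rho(y|x)$, $L^p=L^p(\mathcal X,\mu)$. $\mathcal H$ separable RKHS with continuous kernel $k$, $\sup_xk(x,x)\le\kappa^2$; $S_k:\mathcal H\to L^2$ inclusion, $L_k=S_kS_k^*=\sum_i\lambda_i\langle\cdot,e_i\rangle_{L^2}e_i$ ($\lambda_i$ positive non-increasing, $\{e_i\}$ ONB of $\overline{\operatorname{ran}S_k}$, $\{\lambda_i^{1/2}e_i\}$ ONB of $\mathcal H$), $T=S_k^*S_k$. $[\mathcal H]^s=\{\sum_ia_i\lambda_i^{s/2}e_i:(a_i)\in\ell^2\}$, $\|\sum a_i\lambda_i^{s/2}e_i\|_{[\mathcal H]^s}=\|(a_i)\|_{\ell^2}$. $M_\alpha$ is the smallest $A\ge0$ with $\sum_i\lambda_i^\alpha e_i(x)^2\le A^2$ $\mu$-a.e. ($=\infty$ if none), equal to the norm of $[\mathcal H]^\alpha\hookrightarrow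 L^\infty$. (EDR): $ci^{-\beta}\le\lambda_i\le Ci^{-\beta}$. Embedding index: $\alpha_0=\inf\{\alpha\in[\frac1\beta,1]:M_\alpha<\infty\}$. Filter function: $\varphi_\nu:[0,\kappa^2]\to\mathbb R^+$ with $\sup_zz^\alpha\varphi_\nu(z)\le E\nu^{1-\alpha}$ for all $\alpha\in[0,1]$ and, for some $\tau\ge1$, $\sup_z|1-z\varphi_\nu(z)|z^\alpha\le F_\tau\nu^{-\alpha}$ for $\alpha\in[0,\tau]$. *)

theory Defs
  imports "HOL-Analysis.Analysis" "HOL-Probability.Probability"
begin

text \<open>M is the marginal measure mu on the
input space; lam i (i = 0,1,2,...; index i corresponds to i+1 in the paper) are the
eigenvalues of L_k and e i the corresponding L2(mu)-orthonormal eigenfunctions, chosen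
as genuine functions (elements of H scaled by lam i powr (-1/2)).\<close>

definition rpow :: "real \<Rightarrow> real \<Rightarrow> real" where
  "rpow z a = (if a = 0 then 1 else z powr a)"

definition spectral_system ::
  "'a measure \<Rightarrow> real \<Rightarrow> (nat \<Rightarrow> real) \<Rightarrow> (nat \<Rightarrow> 'a \<Rightarrow> real) \<Rightarrow> bool" where
  "spectral_system M \<kappa> lam e \<longleftrightarrow>
     prob_space M \<and> \<kappa> > 0 \<and>
     (\<forall>i. lam i > 0) \<and> antimono lam \<and>
     (\<forall>i. e i \<in> borel_measurable M \<and> integrable M (\<lambda>x. (e i x)\<^sup>2)) \<and>
     (\<forall>i j. (\<integral>x. e i x * e j x \<partial>M) = (if i = j then 1 else 0)) \<and>
     (AE x in M. summable (\<lambda>i. lam i * (e i x)\<^sup>2) \<and> (\<Sum>i. lam i * (e i x)\<^sup>2) \<le> \<kappa>\<^sup>2)"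

definition EDR :: "(nat \<Rightarrow> real) \<Rightarrow> real \<Rightarrow> bool" where
  "EDR lam \<beta> \<longleftrightarrow> (\<exists>c C. c > 0 \<and> C > 0 \<and>
     (\<forall>i. c * real (Suc i) powr (-\<beta>) \<le> lam i \<and> lam i \<le> C * real (Suc i) powr (-\<beta>)))"

definition Mconst :: "'a measure \<Rightarrow> (nat \<Rightarrow> real) \<Rightarrow> (nat \<Rightarrow> 'a \<Rightarrow> real) \<Rightarrow> real \<Rightarrow> ereal" where
  "Mconst M lam e \<alpha> = Inf {ereal A | A. A \<ge> 0 \<and>
     (AE x in M. summable (\<lambda>i. lam i powr \<alpha> * (e i x)\<^sup>2) \<and>
                 (\<Sum>i. lam i powr \<alpha> * (e i x)\<^sup>2) \<le> A\<^sup>2)}"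

definition emb_index :: "'a measure \<Rightarrow> (nat \<Rightarrow> real) \<Rightarrow> (nat \<Rightarrow> 'a \<Rightarrow> real) \<Rightarrow> real \<Rightarrow> real" where
  "emb_index M lam e \<beta> = Inf {\<alpha>. 1/\<beta> \<le> \<alpha> \<and> \<alpha> \<le> 1 \<and> Mconst M lam e \<alpha> < \<infinity>}"

definition in_interp_ball ::
  "'a measure \<Rightarrow> (nat \<Rightarrow> real) \<Rightarrow> (nat \<Rightarrow> 'a \<Rightarrow> real) \<Rightarrow> real \<Rightarrow> real \<Rightarrow> ('a \<Rightarrow> real) \<Rightarrow> bool" where
  "in_interp_ball M lam e s R f \<longleftrightarrow>
     f \<in> borel_measurable M \<and> integrable M (\<lambda>x. (f x)\<^sup>2) \<and>
     (\<exists>a::nat \<Rightarrow> real. summable (\<lambda>i. (a i)\<^sup>2) \<and> sqrt (\<Sum>i. (a i)\<^sup>2) \<le> R \<and>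
        (\<lambda>n. \<integral>x. (f x - (\<Sum>i<n. a i * lam i powr (s/2) * e i x))\<^sup>2 \<partial>M) \<longlonglongrightarrow> 0)"

definition filter_function ::
  "(real \<Rightarrow> real \<Rightarrow> real) \<Rightarrow> real \<Rightarrow> real \<Rightarrow> real \<Rightarrow> real \<Rightarrow> bool" where
  "filter_function \<phi> \<kappa> E F \<tau> \<longleftrightarrow> \<tau> \<ge> 1 \<and>
     (\<forall>\<nu>>0. \<forall>z\<in>{0..\<kappa>\<^sup>2}. \<phi> \<nu> z \<ge> 0) \<and>
     (\<forall>\<nu>>0. \<forall>\<alpha>\<in>{0..1}. \<forall>z\<in>{0..\<kappa>\<^sup>2}. rpow z \<alpha> * \<phi> \<nu> z \<le> E * \<nu> powr (1 - \<alpha>)) \<and>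
     (\<forall>\<nu>>0. \<forall>\<alpha>\<in>{0..\<tau>}. \<forall>z\<in>{0..\<kappa>\<^sup>2}. \<bar>1 - z * \<phi> \<nu> z\<bar> * rpow z \<alpha> \<le> F * \<nu> powr (-\<alpha>))"

text \<open>f_nu = phi_nu(T) S_k^* f, written in the eigenbasis: S_k^* f = sum_i lam_i <f,e_i> e_i
  and phi_nu(T) acts on the eigenvector lam_i^(1/2) e_i of T by multiplication with
  phi_nu(lam_i).\<close>
definition f_nu ::
  "'a measure \<Rightarrow> (nat \<Rightarrow> real) \<Rightarrow> (nat \<Rightarrow> 'a \<Rightarrow> real) \<Rightarrow> (real \<Rightarrow> real \<Rightarrow> real) \<Rightarrow> real \<Rightarrow> ('a \<Rightarrow> real) \<Rightarrow> 'a \<Rightarrow> real" where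
  "f_nu M lam e \<phi> \<nu> f x = (\<Sum>i. \<phi> \<nu> (lam i) * lam i * (\<integral>y. f y * e i y \<partial>M) * e i x)"

definition Linf_norm :: "'a measure \<Rightarrow> ('a \<Rightarrow> real) \<Rightarrow> ereal" where
  "Linf_norm M f = esssup M (\<lambda>x. ereal \<bar>f x\<bar>)"

end

theory Submission
  imports Defs
begin

lemma amgm_t:
  fixes g e t :: real assumes "t > 0"
  shows "\<bar>g * e\<bar> \<le> (t * g\<^sup>2 + e\<^sup>2 / t) / 2"
proof -
  have "0 \<le> (t * \<bar>g\<bar> - \<bar>e\<bar>)\<^sup>2" by simp
  then have "2 * t * \<bar>g * e\<bar> \<le> t\<^sup>2 * g\<^sup>2 + e\<^sup>2"
    by (simp add: power2_eq_square algebra_simps abs_mult)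
  then show ?thesis using assms
    by (simp add: field_simps power2_eq_square)
qed

lemma CS_series:
  fixes u v :: "nat \<Rightarrow> real"
  assumes su: "summable (\<lambda>i. (u i)\<^sup>2)" and sv: "summable (\<lambda>i. (v i)\<^sup>2)"
  shows "summable (\<lambda>i. u i * v i) \<and> \<bar>\<Sum>i. u i * v i\<bar> \<le> sqrt (\<Sum>i. (u i)\<^sup>2) * sqrt (\<Sum>i. (v i)\<^sup>2)"
proof -
  have b: "norm (u i * v i) \<le> ((u i)\<^sup>2 + (v i)\<^sup>2) / 2" for i
    using amgm_t[of 1 "u i" "v i"] by simp
  have sa: "summable (\<lambda>i. ((u i)\<^sup>2 + (v i)\<^sup>2) / 2)"
    using summable_add[OF su sv] by (intro summable_divide) 
  have s: "summable (\<lambda>i. u i * v i)"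
    by (rule summable_comparison_test'[OF sa]) (use b in auto)
  have "\<bar>\<Sum>i<n. u i * v i\<bar> \<le> sqrt (\<Sum>i. (u i)\<^sup>2) * sqrt (\<Sum>i. (v i)\<^sup>2)" for n
  proof -
    have "(\<Sum>i<n. u i * v i)\<^sup>2 \<le> (\<Sum>i<n. (u i)\<^sup>2) * (\<Sum>i<n. (v i)\<^sup>2)"
      by (rule Cauchy_Schwarz_ineq_sum)
    then have "\<bar>\<Sum>i<n. u i * v i\<bar> \<le> sqrt ((\<Sum>i<n. (u i)\<^sup>2) * (\<Sum>i<n. (v i)\<^sup>2))"
      using real_sqrt_le_mono by fastforce
    also have "\<dots> \<le> sqrt ((\<Sum>i. (u i)\<^sup>2) * (\<Sum>i. (v i)\<^sup>2))"
      by (intro real_sqrt_le_mono mult_mono sum_le_suminf su sv) (auto intro: sum_nonneg suminf_nonneg su sv)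
    finally show ?thesis by (simp add: real_sqrt_mult)
  qed
  moreover have "(\<lambda>n. \<bar>\<Sum>i<n. u i * v i\<bar>) \<longlonglongrightarrow> \<bar>\<Sum>i. u i * v i\<bar>"
    using s summable_LIMSEQ tendsto_rabs by blast
  ultimately have "\<bar>\<Sum>i. u i * v i\<bar> \<le> sqrt (\<Sum>i. (u i)\<^sup>2) * sqrt (\<Sum>i. (v i)\<^sup>2)"
    by (intro LIMSEQ_le_const2) auto
  with s show ?thesis by blast
qed

lemma sq_int_add:
  fixes f g :: "'a \<Rightarrow> real"
  assumes [measurable]: "f \<in> borel_measurable M" "g \<in> borel_measurable M"
    and "integrable M (\<lambda>x. (f x)\<^sup>2)" "integrable M (\<lambda>x. (g x)\<^sup>2)"
  shows "integrable M (\<lambda>x. (f x + g x)\<^sup>2)"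
proof (rule Bochner_Integration.integrable_bound[where f="\<lambda>x. 2 * (f x)\<^sup>2 + 2 * (g x)\<^sup>2"])
  show "integrable M (\<lambda>x. 2 * (f x)\<^sup>2 + 2 * (g x)\<^sup>2)" using assms by auto
  show "AE x in M. norm ((f x + g x)\<^sup>2) \<le> norm (2 * (f x)\<^sup>2 + 2 * (g x)\<^sup>2)"
  proof (intro AE_I2)
    fix x
    have "0 \<le> (f x - g x)\<^sup>2" by simp
    then have "(f x + g x)\<^sup>2 \<le> 2 * (f x)\<^sup>2 + 2 * (g x)\<^sup>2"
      by (simp add: power2_eq_square algebra_simps)
    then show "norm ((f x + g x)\<^sup>2) \<le> norm (2 * (f x)\<^sup>2 + 2 * (g x)\<^sup>2)" by simp
  qed
qed measurable

lemma sq_int_mult: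
  fixes f g :: "'a \<Rightarrow> real"
  assumes [measurable]: "f \<in> borel_measurable M" "g \<in> borel_measurable M"
    and "integrable M (\<lambda>x. (f x)\<^sup>2)" "integrable M (\<lambda>x. (g x)\<^sup>2)"
  shows "integrable M (\<lambda>x. f x * g x)"
proof (rule Bochner_Integration.integrable_bound[where f="\<lambda>x. ((f x)\<^sup>2 + (g x)\<^sup>2) / 2"])
  show "integrable M (\<lambda>x. ((f x)\<^sup>2 + (g x)\<^sup>2) / 2)" using assms by auto
  show "AE x in M. norm (f x * g x) \<le> norm (((f x)\<^sup>2 + (g x)\<^sup>2) / 2)"
    using amgm_t[of 1] by auto
qed measurable

lemma sq_int_sum:
  fixes f :: "nat \<Rightarrow> 'a \<Rightarrow> real"
  assumes [measurable]: "\<And>i. f i \<in> borel_measurable M"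
    and "\<And>i. integrable M (\<lambda>x. (f i x)\<^sup>2)"
  shows "integrable M (\<lambda>x. (\<Sum>i<n. f i x)\<^sup>2)"
proof (induction n)
  case 0 then show ?case by simp
next
  case (Suc n)
  then show ?case using sq_int_add[of "\<lambda>x. \<Sum>i<n. f i x" M "f n"] assms by (simp add: add.commute)
qed


theorem lemma7:
  fixes M :: "'a measure" and lam :: "nat \<Rightarrow> real" and e :: "nat \<Rightarrow> 'a \<Rightarrow> real"
    and \<kappa> \<beta> s R E F \<tau> \<nu> \<alpha> :: real
    and \<phi> :: "real \<Rightarrow> real \<Rightarrow> real" and fstar :: "'a \<Rightarrow> real"
  assumes sys: "spectral_system M \<kappa> lam e"
    and edr: "EDR lam \<beta>" and beta: "\<beta> > 1"
    and idx: "1/\<beta> \<le> emb_index M lam e \<beta>" "emb_index M lam e \<beta> < 1"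
    and filt: "filter_function \<phi> \<kappa> E F \<tau>"
    and s: "0 < s" "s \<le> emb_index M lam e \<beta>"
    and fstar: "in_interp_ball M lam e s R fstar"
    and nu: "\<nu> > 0"
    and alpha: "emb_index M lam e \<beta> < \<alpha>" "\<alpha> \<le> 1"
  shows "Linf_norm M (f_nu M lam e \<phi> \<nu> fstar)
           \<le> Mconst M lam e \<alpha> * ereal (E * R * \<nu> powr ((\<alpha> - s) / 2))"
proof -
  interpret prob_space M using sys unfolding spectral_system_def by blast
  have kpos: "\<kappa> > 0" and lpos: "\<And>i. lam i > 0"
    and em[measurable]: "\<And>i. e i \<in> borel_measurable M"
    and ei: "\<And>i. integrable M (\<lambda>x. (e i x)\<^sup>2)"
    and orth: "\<And>i j. (\<integral>x. e i x * e j x \<partial>M) = (if i = j then 1 else 0)"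
    and kae: "AE x in M. summable (\<lambda>i. lam i * (e i x)\<^sup>2) \<and> (\<Sum>i. lam i * (e i x)\<^sup>2) \<le> \<kappa>\<^sup>2"
    using sys unfolding spectral_system_def by auto
  have fm[measurable]: "fstar \<in> borel_measurable M" and fi: "integrable M (\<lambda>x. (fstar x)\<^sup>2)"
    using fstar unfolding in_interp_ball_def by auto
  obtain a :: "nat \<Rightarrow> real" where sa: "summable (\<lambda>i. (a i)\<^sup>2)" and aR: "sqrt (\<Sum>i. (a i)\<^sup>2) \<le> R"
    and lim: "(\<lambda>n. \<integral>x. (fstar x - (\<Sum>i<n. a i * lam i powr (s/2) * e i x))\<^sup>2 \<partial>M) \<longlonglongrightarrow> 0"
    using fstar unfolding in_interp_ball_def by blast
  have ei1: "(\<integral>x. (e i x)\<^sup>2 \<partial>M) = 1" for i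
    using orth[of i i] by (simp add: power2_eq_square)
  have lk: "lam i \<le> \<kappa>\<^sup>2" for i
  proof -
    have "AE x in M. lam i * (e i x)\<^sup>2 \<le> \<kappa>\<^sup>2"
      using kae
    proof eventually_elim
      case (elim x)
      then have "(\<Sum>j\<in>{i}. lam j * (e j x)\<^sup>2) \<le> (\<Sum>j. lam j * (e j x)\<^sup>2)"
        by (intro sum_le_suminf) (auto intro!: mult_nonneg_nonneg less_imp_le[OF lpos])
      with elim show ?case by simp
    qed
    then have "(\<integral>x. lam i * (e i x)\<^sup>2 \<partial>M) \<le> (\<integral>x. \<kappa>\<^sup>2 \<partial>M)"
      by (intro integral_mono_AE) (auto intro: ei)
    then show ?thesis using ei1[of i] by (simp add: prob_space)
  qed
  define S where "S n x = (\<Sum>j<n. a j * lam j powr (s/2) * e j x)" for n x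
  have Sm[measurable]: "S n \<in> borel_measurable M" for n unfolding S_def by measurable
  have Si: "integrable M (\<lambda>x. (S n x)\<^sup>2)" for n
    unfolding S_def
    by (rule sq_int_sum) (auto simp: power_mult_distrib intro: ei)
  have gi: "integrable M (\<lambda>x. (fstar x - S n x)\<^sup>2)" for n
    using sq_int_add[of fstar M "\<lambda>x. - S n x"] fi Si by simp
  have coef: "(\<integral>x. fstar x * e i x \<partial>M) = a i * lam i powr (s/2)" for i
  proof (rule ccontr)
    define d where "d = \<bar>(\<integral>x. fstar x * e i x \<partial>M) - a i * lam i powr (s/2)\<bar>"
    assume "\<not> ?thesis"
    then have dpos: "d > 0" unfolding d_def by simp
    have "eventually (\<lambda>n. (\<integral>x. (fstar x - S n x)\<^sup>2 \<partial>M) < d\<^sup>2/4) sequentially"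
      using lim dpos unfolding S_def by (intro order_tendstoD) auto
    then obtain N where N: "\<And>n. n \<ge> N \<Longrightarrow> (\<integral>x. (fstar x - S n x)\<^sup>2 \<partial>M) < d\<^sup>2/4"
      unfolding eventually_sequentially by blast
    define n where "n = max N (Suc i)"
    have n: "n > i" "(\<integral>x. (fstar x - S n x)\<^sup>2 \<partial>M) < d\<^sup>2/4"
      using N[of n] unfolding n_def by auto
    have Sei: "(\<integral>x. S n x * e i x \<partial>M) = a i * lam i powr (s/2)"
    proof -
      have "(\<integral>x. S n x * e i x \<partial>M) = (\<integral>x. (\<Sum>j<n. a j * lam j powr (s/2) * (e j x * e i x)) \<partial>M)"
        by (simp add: S_def sum_distrib_right mult.assoc)
      also have "\<dots> = (\<Sum>j<n. (\<integral>x. a j * lam j powr (s/2) * (e j x * e i x) \<partial>M))"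
        by (rule Bochner_Integration.integral_sum[where f="\<lambda>j x. a j * lam j powr (s/2) * (e j x * e i x)"]) (auto intro!: sq_int_mult ei)
      also have "\<dots> = (\<Sum>j<n. a j * lam j powr (s/2) * (\<integral>x. e j x * e i x \<partial>M))"
        by simp
      also have "\<dots> = (\<Sum>j<n. if j = i then a i * lam i powr (s/2) else 0)"
        by (intro sum.cong) (auto simp: orth)
      also have "\<dots> = a i * lam i powr (s/2)" using n by simp
      finally show ?thesis .
    qed
    have int1: "integrable M (\<lambda>x. fstar x * e i x)" by (rule sq_int_mult) (auto intro: fi ei)
    have int2: "integrable M (\<lambda>x. S n x * e i x)" by (rule sq_int_mult) (auto intro: Si ei)
    have "(\<integral>x. (fstar x - S n x) * e i x \<partial>M) = (\<integral>x. fstar x * e i x \<partial>M) - a i * lam i powr (s/2)"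
      using int1 int2 Sei by (simp add: left_diff_distrib)
    then have "d = \<bar>\<integral>x. (fstar x - S n x) * e i x \<partial>M\<bar>" unfolding d_def by simp
    also have "\<dots> \<le> (\<integral>x. \<bar>(fstar x - S n x) * e i x\<bar> \<partial>M)"
      by (rule integral_abs_bound)
    also have "\<dots> \<le> (\<integral>x. ((2/d) * (fstar x - S n x)\<^sup>2 + (e i x)\<^sup>2 / (2/d)) / 2 \<partial>M)"
    proof (rule integral_mono)
      show "integrable M (\<lambda>x. \<bar>(fstar x - S n x) * e i x\<bar>)"
        by (intro integrable_abs sq_int_mult gi ei) auto
      have "integrable M (\<lambda>x. (2/d) * (fstar x - S n x)\<^sup>2 + (e i x)\<^sup>2 / (2/d))"
        using gi ei by (intro Bochner_Integration.integrable_add integrable_mult_right integrable_divide)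
      then show "integrable M (\<lambda>x. ((2/d) * (fstar x - S n x)\<^sup>2 + (e i x)\<^sup>2 / (2/d)) / 2)"
        by (rule integrable_divide)
      show "\<bar>(fstar x - S n x) * e i x\<bar> \<le> ((2/d) * (fstar x - S n x)\<^sup>2 + (e i x)\<^sup>2 / (2/d)) / 2" for x
        using dpos by (intro amgm_t) simp
    qed
    also have "\<dots> = ((2/d) * (\<integral>x. (fstar x - S n x)\<^sup>2 \<partial>M) + 1 / (2/d)) / 2"
      using gi ei ei1 by simp
    also have "\<dots> < ((2/d) * (d\<^sup>2/4) + 1 / (2/d)) / 2"
    proof -
      have "(2/d) * (\<integral>x. (fstar x - S n x)\<^sup>2 \<partial>M) < (2/d) * (d\<^sup>2/4)"
        using n dpos by (intro mult_strict_left_mono) auto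
      then show ?thesis by (intro divide_strict_right_mono add_strict_right_mono) auto
    qed
    also have "\<dots> = d / 2" by (simp add: power2_eq_square field_simps)
    finally show False using dpos by simp
  qed
  have Epos: "E \<ge> 0"
  proof -
    have h: "\<forall>\<alpha>\<in>{0..1}. \<forall>z\<in>{0..\<kappa>\<^sup>2}. rpow z \<alpha> * \<phi> \<nu> z \<le> E * \<nu> powr (1 - \<alpha>)"
      and h2: "\<forall>z\<in>{0..\<kappa>\<^sup>2}. 0 \<le> \<phi> \<nu> z"
      using filt nu unfolding filter_function_def by blast+
    have "rpow 0 0 * \<phi> \<nu> 0 \<le> E * \<nu> powr (1 - 0)" "\<phi> \<nu> 0 \<ge> 0"
      using h[rule_format, of 0 0] h2[rule_format, of 0] kpos by auto
    then have "0 \<le> E * \<nu>" using nu by (simp add: rpow_def)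
    then show ?thesis using nu by (simp add: zero_le_mult_iff)
  qed
  have sa0: "(\<Sum>i. (a i)\<^sup>2) \<ge> 0" by (rule suminf_nonneg[OF sa]) simp
  have Rpos: "R \<ge> 0" using aR sa0 by (meson order_trans real_sqrt_ge_zero)
  have as: "0 < \<alpha> - s" "\<alpha> - s < 1" using s alpha by auto
  define \<gamma> where "\<gamma> = 1 - (\<alpha> - s)/2"
  have g01: "\<gamma> \<in> {0..1}" "\<gamma> \<noteq> 0" using as unfolding \<gamma>_def by auto
  define K where "K = E * \<nu> powr ((\<alpha> - s)/2)"
  have Kpos: "K \<ge> 0" unfolding K_def using Epos by simp
  have vb: "0 \<le> \<phi> \<nu> (lam i) * lam i powr \<gamma> \<and> \<phi> \<nu> (lam i) * lam i powr \<gamma> \<le> K" for i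
  proof -
    have z: "lam i \<in> {0..\<kappa>\<^sup>2}" using lk[of i] lpos[of i] by auto
    have "rpow (lam i) \<gamma> * \<phi> \<nu> (lam i) \<le> E * \<nu> powr (1 - \<gamma>)" "\<phi> \<nu> (lam i) \<ge> 0"
      using filt nu z g01(1) unfolding filter_function_def by blast+
    moreover have "1 - \<gamma> = (\<alpha> - s)/2" unfolding \<gamma>_def by simp
    ultimately show ?thesis using g01(2) unfolding rpow_def K_def by (simp add: mult.commute)
  qed
  have termeq: "\<phi> \<nu> (lam i) * lam i * (\<integral>y. fstar y * e i y \<partial>M) * e i x
      = (lam i powr (\<alpha>/2) * e i x) * (\<phi> \<nu> (lam i) * lam i powr \<gamma> * a i)" for i x
  proof -
    have "lam i powr (\<alpha>/2) * lam i powr \<gamma> = lam i powr (\<alpha>/2 + \<gamma>)"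
      by (simp add: powr_add)
    also have "\<alpha>/2 + \<gamma> = 1 + s/2" unfolding \<gamma>_def by (simp add: field_simps)
    also have "lam i powr (1 + s/2) = lam i * lam i powr (s/2)"
      using lpos[of i] by (simp add: powr_add)
    finally have "lam i powr (\<alpha>/2) * lam i powr \<gamma> = lam i * lam i powr (s/2)" .
    then show ?thesis unfolding coef by (simp add: algebra_simps)
  qed
  have fnu_eq: "f_nu M lam e \<phi> \<nu> fstar x
      = (\<Sum>i. (lam i powr (\<alpha>/2) * e i x) * (\<phi> \<nu> (lam i) * lam i powr \<gamma> * a i))" for x
    unfolding f_nu_def termeq ..
  define v where "v i = \<phi> \<nu> (lam i) * lam i powr \<gamma> * a i" for i
  have v2: "(v i)\<^sup>2 \<le> K\<^sup>2 * (a i)\<^sup>2" for i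
  proof -
    have "(\<phi> \<nu> (lam i) * lam i powr \<gamma>)\<^sup>2 \<le> K\<^sup>2" using vb[of i] by (intro power_mono) auto
    then show ?thesis unfolding v_def by (simp add: power_mult_distrib mult_right_mono)
  qed
  have sv: "summable (\<lambda>i. (v i)\<^sup>2)"
    by (rule summable_comparison_test'[where g="\<lambda>i. K\<^sup>2 * (a i)\<^sup>2"]) (use v2 sa in \<open>auto intro: summable_mult\<close>)
  have svK: "sqrt (\<Sum>i. (v i)\<^sup>2) \<le> K * R"
  proof -
    have "(\<Sum>i. (v i)\<^sup>2) \<le> (\<Sum>i. K\<^sup>2 * (a i)\<^sup>2)"
      by (intro suminf_le v2 sv summable_mult sa)
    also have "\<dots> = K\<^sup>2 * (\<Sum>i. (a i)\<^sup>2)" by (rule suminf_mult[OF sa])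
    finally have "sqrt (\<Sum>i. (v i)\<^sup>2) \<le> sqrt (K\<^sup>2 * (\<Sum>i. (a i)\<^sup>2))" by (rule real_sqrt_le_mono)
    also have "\<dots> = K * sqrt (\<Sum>i. (a i)\<^sup>2)" using Kpos by (simp add: real_sqrt_mult)
    also have "\<dots> \<le> K * R" using aR Kpos by (rule mult_left_mono)
    finally show ?thesis .
  qed
  have bound: "AE x in M. \<bar>f_nu M lam e \<phi> \<nu> fstar x\<bar> \<le> A * (K * R)"
    if A: "A \<ge> 0" "AE x in M. summable (\<lambda>i. lam i powr \<alpha> * (e i x)\<^sup>2) \<and>
                 (\<Sum>i. lam i powr \<alpha> * (e i x)\<^sup>2) \<le> A\<^sup>2" for A
    using A(2)
  proof eventually_elim
    case (elim x)
    define u where "u i = lam i powr (\<alpha>/2) * e i x" for i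
    have u2: "(u i)\<^sup>2 = lam i powr \<alpha> * (e i x)\<^sup>2" for i
    proof -
      have "(lam i powr (\<alpha>/2))\<^sup>2 = lam i powr \<alpha>"
        by (simp add: power2_eq_square powr_add[symmetric])
      then show ?thesis unfolding u_def by (simp add: power_mult_distrib)
    qed
    have su: "summable (\<lambda>i. (u i)\<^sup>2)" and suA: "(\<Sum>i. (u i)\<^sup>2) \<le> A\<^sup>2"
      using elim unfolding u2 by auto
    have "\<bar>f_nu M lam e \<phi> \<nu> fstar x\<bar> = \<bar>\<Sum>i. u i * v i\<bar>"
      unfolding fnu_eq u_def v_def by simp
    also have "\<dots> \<le> sqrt (\<Sum>i. (u i)\<^sup>2) * sqrt (\<Sum>i. (v i)\<^sup>2)"
      using CS_series[OF su sv] by blast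
    also have "\<dots> \<le> A * (K * R)"
    proof (rule mult_mono)
      show "sqrt (\<Sum>i. (u i)\<^sup>2) \<le> A" using suA A(1) real_sqrt_le_mono by fastforce
    qed (use svK A(1) suminf_nonneg[OF sv] in auto)
    finally show ?case .
  qed
  have fmeas[measurable]: "f_nu M lam e \<phi> \<nu> fstar \<in> borel_measurable M"
    unfolding f_nu_def[abs_def] by measurable
  have CK: "E * R * \<nu> powr ((\<alpha> - s) / 2) = K * R" unfolding K_def by simp
  show ?thesis
  proof (cases "K * R = 0")
    case True
    have z: "f_nu M lam e \<phi> \<nu> fstar x = 0" for x
    proof -
      have "v i = 0" for i
      proof (cases "K = 0")
        case True
        then have "\<phi> \<nu> (lam i) * lam i powr \<gamma> = 0" using vb[of i] by linarith
        then show ?thesis unfolding v_def by simp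
      next
        case False
        then have "R = 0" using \<open>K * R = 0\<close> by simp
        then have "(\<Sum>i. (a i)\<^sup>2) = 0" using aR sa0 by simp
        then have "a i = 0" using suminf_eq_zero_iff[OF sa] by simp
        then show ?thesis unfolding v_def by simp
      qed
      then show ?thesis unfolding fnu_eq v_def[symmetric] by simp
    qed
    have "Linf_norm M (f_nu M lam e \<phi> \<nu> fstar) \<le> 0"
      unfolding Linf_norm_def z by (rule esssup_I) auto
    then show ?thesis unfolding CK True by (simp add: zero_ereal_def[symmetric])
  next
    case False
    then have Cpos: "K * R > 0" using Kpos Rpos by simp
    define P where "P y \<longleftrightarrow> y \<in> {ereal A | A. A \<ge> 0 \<and>
     (AE x in M. summable (\<lambda>i. lam i powr \<alpha> * (e i x)\<^sup>2) \<and>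
                 (\<Sum>i. lam i powr \<alpha> * (e i x)\<^sup>2) \<le> A\<^sup>2)}" for y
    have "Mconst M lam e \<alpha> * ereal (K * R) = ereal (K * R) * Inf {y. P y}"
      unfolding Mconst_def P_def by (simp add: mult.commute)
    also have "\<dots> = Inf {ereal (K * R) * y | y. P y}"
      by (rule ereal_Inf_cmult[OF Cpos, symmetric])
    finally have eq: "Mconst M lam e \<alpha> * ereal (K * R) = Inf {ereal (K * R) * y | y. P y}" .
    have "Linf_norm M (f_nu M lam e \<phi> \<nu> fstar) \<le> Inf {ereal (K * R) * y | y. P y}"
    proof (rule Inf_greatest)
      fix z assume "z \<in> {ereal (K * R) * y | y. P y}"
      then obtain A where A: "A \<ge> 0" "AE x in M. summable (\<lambda>i. lam i powr \<alpha> * (e i x)\<^sup>2) \<and>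
                 (\<Sum>i. lam i powr \<alpha> * (e i x)\<^sup>2) \<le> A\<^sup>2" and zA: "z = ereal (K * R * A)"
        unfolding P_def by auto
      show "Linf_norm M (f_nu M lam e \<phi> \<nu> fstar) \<le> z"
        unfolding Linf_norm_def zA
        by (rule esssup_I) (use bound[OF A] in \<open>auto simp: mult.commute\<close>)
    qed
    then show ?thesis unfolding CK eq .
  qed
qed

end
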